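(* Let $G$ be a nontrivial cactus on $n$ vertices with $k$ cycles. Then \[R(G)\geq \frac{n-k-1}{2}+\sqrt k,\] with equality for a bouquet of cycles (a collection of $k$ cycles all sharing one common vertex and otherwise disjoint).
   Context: A cactus is a connected graph in which any two cycles share at most one vertex; it is nontrivial if it has no bridges (edges whose removal disconnects the graph). The Randi\'c index is $R(G)=\sum_{uv\in E(G)}\frac{1}{\sqrt{d_ud_v}}$, where $d_v$ is the degree of $v$. *)

theory Defs
  imports Complex_Main
begin

definition simple_graph :: "'a set \<Rightarrow> 'a set set \<Rightarrow> bool" where
  "simple_graph V E \<longleftrightarrow> finite V \<and>
     (\<forall>e\<in>E. \<exists>u v. e = {u, v} \<and> u \<noteq> v \<and> u \<in> V \<and> v \<in> V)"

definition adj :: "'a set set \<Rightarrow> 'a \<Rightarrow> 'a \<Rightarrow> bool" where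
  "adj E u v \<longleftrightarrow> {u, v} \<in> E"

definition connected_graph :: "'a set \<Rightarrow> 'a set set \<Rightarrow> bool" where
  "connected_graph V E \<longleftrightarrow> V \<noteq> {} \<and> (\<forall>u\<in>V. \<forall>v\<in>V. (adj E)\<^sup>*\<^sup>* u v)"

definition is_bridge :: "'a set \<Rightarrow> 'a set set \<Rightarrow> 'a set \<Rightarrow> bool" where
  "is_bridge V E e \<longleftrightarrow> e \<in> E \<and> \<not> connected_graph V (E - {e})"

definition degree :: "'a set set \<Rightarrow> 'a \<Rightarrow> nat" where
  "degree E v = card {e\<in>E. v \<in> e}"

definition randic :: "'a set set \<Rightarrow> real" where
  "randic E = (\<Sum>e\<in>E. 1 / sqrt (\<Prod>v\<in>e. real (degree E v)))"

definition cycle_list :: "'a set \<Rightarrow> 'a set set \<Rightarrow> 'a list \<Rightarrow> bool" where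
  "cycle_list V E xs \<longleftrightarrow> length xs \<ge> 3 \<and> distinct xs \<and> set xs \<subseteq> V \<and>
     (\<forall>i<length xs. {xs ! i, xs ! ((i + 1) mod length xs)} \<in> E)"

definition cycle_edges :: "'a list \<Rightarrow> 'a set set" where
  "cycle_edges xs = {{xs ! i, xs ! ((i + 1) mod length xs)} | i. i < length xs}"

definition cycles :: "'a set \<Rightarrow> 'a set set \<Rightarrow> 'a set set set" where
  "cycles V E = {cycle_edges xs | xs. cycle_list V E xs}"

definition num_cycles :: "'a set \<Rightarrow> 'a set set \<Rightarrow> nat" where
  "num_cycles V E = card (cycles V E)"

definition cactus :: "'a set \<Rightarrow> 'a set set \<Rightarrow> bool" where
  "cactus V E \<longleftrightarrow> simple_graph V E \<and> connected_graph V E \<and>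
     (\<forall>C1\<in>cycles V E. \<forall>C2\<in>cycles V E. C1 \<noteq> C2 \<longrightarrow> card (\<Union>C1 \<inter> \<Union>C2) \<le> 1)"

definition nontrivial_cactus :: "'a set \<Rightarrow> 'a set set \<Rightarrow> bool" where
  "nontrivial_cactus V E \<longleftrightarrow> cactus V E \<and> (\<forall>e\<in>E. \<not> is_bridge V E e)"

text \<open>Bouquet of cycles: a (nontrivial cactus) graph all of whose cycles pass through
  one common vertex c (every edge lies on a cycle since there are no bridges).\<close>
definition bouquet :: "'a set \<Rightarrow> 'a set set \<Rightarrow> bool" where
  "bouquet V E \<longleftrightarrow> (\<exists>c\<in>V. (\<forall>C\<in>cycles V E. c \<in> \<Union>C) \<and> E = \<Union>(cycles V E))"

end

theory Submission imports Defs begin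

lemma path_exists:
  assumes "r\<^sup>*\<^sup>* u v"
  shows "\<exists>xs. xs \<noteq> [] \<and> hd xs = u \<and> last xs = v \<and> distinct xs \<and>
           (\<forall>i. i + 1 < length xs \<longrightarrow> r (xs ! i) (xs ! (i + 1)))"
  using assms
proof (induction rule: converse_rtranclp_induct)
  case base
  then show ?case by (intro exI[of _ "[v]"]) auto
next
  case (step x y)
  then obtain xs where xs: "xs \<noteq> []" "hd xs = y" "last xs = v" "distinct xs"
    "\<forall>i. i + 1 < length xs \<longrightarrow> r (xs ! i) (xs ! (i + 1))" by blast
  show ?case
  proof (cases "x \<in> set xs")
    case True
    then obtain j where j: "j < length xs" "xs ! j = x" by (meson in_set_conv_nth)
    let ?ys = "drop j xs"
    have "?ys \<noteq> []" using j by simp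
    moreover have "hd ?ys = x" using j by (simp add: hd_drop_conv_nth)
    moreover have "last ?ys = v" using j xs by (simp add: last_drop)
    moreover have "distinct ?ys" using xs by simp
    moreover have "\<forall>i. i + 1 < length ?ys \<longrightarrow> r (?ys ! i) (?ys ! (i + 1))"
      using xs(5) j by (auto simp: add.commute add.left_commute)
    ultimately show ?thesis by blast
  next
    case False
    let ?ys = "x # xs"
    have "\<forall>i. i + 1 < length ?ys \<longrightarrow> r (?ys ! i) (?ys ! (i + 1))"
    proof (intro allI impI)
      fix i assume i: "i + 1 < length ?ys"
      show "r (?ys ! i) (?ys ! (i + 1))"
      proof (cases i)
        case 0 then show ?thesis using step(1) xs by (cases xs) auto
      next
        case (Suc j) then show ?thesis using xs(5) i by auto
      qed
    qed
    then show ?thesis using xs False by (intro exI[of _ ?ys]) auto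
  qed
qed


lemma sg_edge:
  assumes "simple_graph V E" "e \<in> E"
  shows "\<exists>u v. e = {u, v} \<and> u \<noteq> v \<and> u \<in> V \<and> v \<in> V"
  using assms unfolding simple_graph_def by blast

lemma sg_finite_E:
  assumes "simple_graph V E" shows "finite E"
proof -
  have "E \<subseteq> Pow V"
  proof
    fix e assume "e \<in> E"
    then obtain u v where "e = {u, v}" "u \<in> V" "v \<in> V" using sg_edge[OF assms] by blast
    then show "e \<in> Pow V" by simp
  qed
  moreover have "finite V" using assms unfolding simple_graph_def by blast
  ultimately show ?thesis by (meson finite_Pow_iff finite_subset)
qed

lemma sg_subset: "simple_graph V E \<Longrightarrow> F \<subseteq> E \<Longrightarrow> simple_graph V F"
  unfolding simple_graph_def by (meson subsetD)

lemma adj_symp: "symp (adj E)"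
  unfolding adj_def symp_def by (simp add: insert_commute)

lemma rt_sym: "(adj E)\<^sup>*\<^sup>* x y \<Longrightarrow> (adj E)\<^sup>*\<^sup>* y x"
  by (rule sympD[OF symp_rtranclp[OF adj_symp]])

lemma rt_mono: "E \<subseteq> F \<Longrightarrow> (adj E)\<^sup>*\<^sup>* x y \<Longrightarrow> (adj F)\<^sup>*\<^sup>* x y"
proof -
  assume "E \<subseteq> F" "(adj E)\<^sup>*\<^sup>* x y"
  moreover have "adj E \<le> adj F" using \<open>E \<subseteq> F\<close> unfolding adj_def by auto
  ultimately show ?thesis using rtranclp_mono[OF \<open>adj E \<le> adj F\<close>] by (metis predicate2D)
qed

lemma cycles_subset: "C \<in> cycles V E \<Longrightarrow> C \<subseteq> E"
  unfolding cycles_def cycle_edges_def cycle_list_def by auto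

lemma cycle_list_mono: "E \<subseteq> F \<Longrightarrow> cycle_list V E xs \<Longrightarrow> cycle_list V F xs"
  unfolding cycle_list_def by auto

lemma cycles_mono: "E \<subseteq> F \<Longrightarrow> cycles V E \<subseteq> cycles V F"
proof
  fix C assume "E \<subseteq> F" "C \<in> cycles V E"
  then obtain xs where "C = cycle_edges xs" "cycle_list V E xs" unfolding cycles_def by blast
  then show "C \<in> cycles V F" using cycle_list_mono[OF \<open>E \<subseteq> F\<close>] unfolding cycles_def by blast
qed

lemma finite_cycles: "simple_graph V E \<Longrightarrow> finite (cycles V E)"
proof -
  assume "simple_graph V E"
  then have "finite (Pow E)" using sg_finite_E by blast
  moreover have "cycles V E \<subseteq> Pow E" using cycles_subset by blast
  ultimately show ?thesis using finite_subset by blast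
qed

lemma new_cycle:
  assumes sg: "simple_graph V F" and uV: "u \<in> V" and uv: "u \<noteq> v" and nF: "{u, v} \<notin> F"
    and rt: "(adj F)\<^sup>*\<^sup>* u v"
  shows "\<exists>C\<in>cycles V (insert {u, v} F). {u, v} \<in> C"
proof -
  obtain xs where xs: "xs \<noteq> []" "hd xs = u" "last xs = v" "distinct xs"
    and st: "\<forall>i. i + 1 < length xs \<longrightarrow> adj F (xs ! i) (xs ! (i + 1))"
    using path_exists[OF rt] by blast
  define L where "L = length xs"
  have h0: "xs ! 0 = u" using xs by (simp add: hd_conv_nth)
  have hL: "xs ! (L - 1) = v" using xs by (simp add: L_def last_conv_nth)
  have L2: "L \<ge> 2"
  proof (rule ccontr)
    assume "\<not> L \<ge> 2"
    moreover have "L \<noteq> 0" using xs L_def by simp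
    ultimately have "L = 1" by simp
    then show False using h0 hL uv by simp
  qed
  have L3: "L \<ge> 3"
  proof (rule ccontr)
    assume "\<not> L \<ge> 3"
    then have "L = 2" using L2 by simp
    then have "adj F (xs ! 0) (xs ! 1)" using st L_def by simp
    then show False using h0 hL \<open>L = 2\<close> nF unfolding adj_def by simp
  qed
  have setV: "set xs \<subseteq> V"
  proof
    fix y assume "y \<in> set xs"
    then obtain i where i: "i < L" "xs ! i = y" using L_def by (meson in_set_conv_nth)
    show "y \<in> V"
    proof (cases i)
      case 0 then show ?thesis using i h0 uV by simp
    next
      case (Suc j)
      then have "adj F (xs ! j) (xs ! i)" using st i L_def by auto
      then have "{xs ! j, y} \<in> F" using i unfolding adj_def by simp
      then show ?thesis using sg_edge[OF sg] by (metis doubleton_eq_iff)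
    qed
  qed
  have cl: "cycle_list V (insert {u, v} F) xs"
    unfolding cycle_list_def
  proof (intro conjI allI impI)
    show "3 \<le> length xs" using L3 L_def by simp
    show "distinct xs" by fact
    show "set xs \<subseteq> V" by fact
    fix i assume i: "i < length xs"
    show "{xs ! i, xs ! ((i + 1) mod length xs)} \<in> insert {u, v} F"
    proof (cases "i + 1 < length xs")
      case True
      then show ?thesis using st unfolding adj_def by simp
    next
      case False
      then have "i + 1 = length xs" using i by simp
      then have "i = L - 1" "(i + 1) mod length xs = 0" using L_def by auto
      then have "xs ! i = v" "xs ! ((i + 1) mod length xs) = u" using h0 hL by simp_all
      then show ?thesis by (simp add: doubleton_eq_iff)
    qed
  qed
  have "{u, v} \<in> cycle_edges xs"
    unfolding cycle_edges_def
  proof (intro CollectI exI conjI)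
    show "L - 1 < length xs" using L2 L_def by simp
    have "L - 1 + 1 = length xs" using L2 L_def by simp
    then have "(L - 1 + 1) mod length xs = 0" by simp
    then have "xs ! ((L - 1 + 1) mod length xs) = u" using h0 by simp
    then show "{u, v} = {xs ! (L - 1), xs ! ((L - 1 + 1) mod length xs)}"
      using hL by (simp add: doubleton_eq_iff)
  qed
  moreover have "cycle_edges xs \<in> cycles V (insert {u, v} F)"
    using cl unfolding cycles_def by auto
  ultimately show ?thesis by blast
qed


definition cls_of :: "'a set \<Rightarrow> 'a set set \<Rightarrow> 'a \<Rightarrow> 'a set" where
  "cls_of V E x = {y\<in>V. (adj E)\<^sup>*\<^sup>* x y}"

definition cls :: "'a set \<Rightarrow> 'a set set \<Rightarrow> 'a set set" where
  "cls V E = cls_of V E ` V"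

lemma cls_of_eq: "(adj E)\<^sup>*\<^sup>* x y \<Longrightarrow> cls_of V E x = cls_of V E y"
proof -
  assume xy: "(adj E)\<^sup>*\<^sup>* x y"
  have yx: "(adj E)\<^sup>*\<^sup>* y x" using rt_sym[OF xy] .
  show ?thesis unfolding cls_of_def
  proof (intro set_eqI iffI)
    fix z assume "z \<in> {y \<in> V. (adj E)\<^sup>*\<^sup>* x y}"
    then show "z \<in> {ya \<in> V. (adj E)\<^sup>*\<^sup>* y ya}" using rtranclp_trans[OF yx] by blast
  next
    fix z assume "z \<in> {ya \<in> V. (adj E)\<^sup>*\<^sup>* y ya}"
    then show "z \<in> {y \<in> V. (adj E)\<^sup>*\<^sup>* x y}" using rtranclp_trans[OF xy] by blast
  qed
qed

lemma cyc_count_step: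
  assumes sg: "simple_graph V (insert e F)" and eF: "e \<notin> F"
    and IH: "card F + card (cls V F) \<le> card V + card (cycles V F)"
  shows "card (insert e F) + card (cls V (insert e F)) \<le> card V + card (cycles V (insert e F))"
proof -
  define F' where "F' = insert e F"
  have sgF: "simple_graph V F" using sg_subset[OF sg] by blast
  have finV: "finite V" using sg unfolding simple_graph_def by blast
  have finF: "finite F" using sg_finite_E[OF sgF] .
  obtain u v where e: "e = {u, v}" "u \<noteq> v" "u \<in> V" "v \<in> V" using sg_edge[OF sg] by blast
  define h where "h C = \<Union> (cls_of V F' ` C)" for C
  have FF': "F \<subseteq> F'" unfolding F'_def by blast
  have hg: "h (cls_of V F x) = cls_of V F' x" if "x \<in> V" for x
  proof -
    have allq: "\<And>y. y \<in> cls_of V F x \<Longrightarrow> cls_of V F' y = cls_of V F' x"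
    proof -
      fix y assume "y \<in> cls_of V F x"
      then have "(adj F)\<^sup>*\<^sup>* x y" unfolding cls_of_def by simp
      then have "(adj F')\<^sup>*\<^sup>* x y" by (rule rt_mono[OF FF'])
      then show "cls_of V F' y = cls_of V F' x" by (rule cls_of_eq[symmetric])
    qed
    have "x \<in> cls_of V F x" using that unfolding cls_of_def by simp
    have "cls_of V F' ` cls_of V F x = (\<lambda>_. cls_of V F' x) ` cls_of V F x"
      by (rule image_cong[OF refl], rule allq)
    also have "\<dots> = {cls_of V F' x}" using \<open>x \<in> cls_of V F x\<close> by (rule image_constant)
    finally show ?thesis unfolding h_def by simp
  qed
  have clsF': "cls V F' = h ` cls V F"
    unfolding cls_def image_image by (rule image_cong[OF refl], rule hg[symmetric])
  have fincls: "finite (cls V F)" unfolding cls_def using finV by simp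
  have cle: "card (cls V F') \<le> card (cls V F)"
    unfolding clsF' using card_image_le[OF fincls] .
  have fincyc: "finite (cycles V F')" using finite_cycles[OF sg] unfolding F'_def .
  have cycsub: "cycles V F \<subseteq> cycles V F'" using cycles_mono[OF FF'] .
  have cardF': "card F' = card F + 1" unfolding F'_def using finF eF by simp
  show ?thesis
  proof (cases "(adj F)\<^sup>*\<^sup>* u v")
    case True
    have "{u, v} \<notin> F" using eF e by simp
    from new_cycle[OF sgF e(3) e(2) this True]
    obtain C where C: "C \<in> cycles V F'" "e \<in> C"
      unfolding F'_def e(1) by (elim bexE)
    have "C \<notin> cycles V F"
    proof
      assume "C \<in> cycles V F"
      then have "C \<subseteq> F" by (rule cycles_subset)
      then show False using C(2) eF by (simp add: subset_iff)
    qed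
    then have "card (insert C (cycles V F)) \<le> card (cycles V F')"
      using C(1) cycsub fincyc by (intro card_mono) auto
    moreover have "card (insert C (cycles V F)) = card (cycles V F) + 1"
      using \<open>C \<notin> cycles V F\<close> finite_subset[OF cycsub fincyc] by simp
    ultimately show ?thesis using IH cle cardF' unfolding F'_def by linarith
  next
    case False
    have ne: "cls_of V F u \<noteq> cls_of V F v"
    proof
      assume "cls_of V F u = cls_of V F v"
      moreover have "v \<in> cls_of V F v" using e unfolding cls_of_def by simp
      ultimately have "v \<in> cls_of V F u" by simp
      then show False using False unfolding cls_of_def by simp
    qed
    have "adj F' u v" unfolding adj_def F'_def using e by simp
    then have "(adj F')\<^sup>*\<^sup>* u v" by (rule r_into_rtranclp)
    then have "cls_of V F' u = cls_of V F' v" by (rule cls_of_eq)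
    then have heq: "h (cls_of V F u) = h (cls_of V F v)" by (simp only: hg[OF e(3)] hg[OF e(4)])
    have m1: "cls_of V F u \<in> cls V F" unfolding cls_def using e(3) by (rule imageI)
    have m2: "cls_of V F v \<in> cls V F" unfolding cls_def using e(4) by (rule imageI)
    have ninj: "\<not> inj_on h (cls V F)"
    proof
      assume "inj_on h (cls V F)"
      from inj_onD[OF this heq m1 m2] ne show False by simp
    qed
    have "card (cls V F') \<noteq> card (cls V F)"
    proof
      assume "card (cls V F') = card (cls V F)"
      then have "inj_on h (cls V F)" unfolding clsF' using inj_on_iff_eq_card[OF fincls, of h] by (simp only:)
      then show False using ninj by simp
    qed
    then have "card (cls V F') + 1 \<le> card (cls V F)" using cle by simp
    moreover have "card (cycles V F) \<le> card (cycles V F')" using card_mono[OF fincyc cycsub] .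
    ultimately show ?thesis using IH cardF' unfolding F'_def by linarith
  qed
qed

lemma cyc_count_gen:
  assumes sg: "simple_graph V E" and finF: "finite F"
  shows "F \<subseteq> E \<Longrightarrow> card F + card (cls V F) \<le> card V + card (cycles V F)"
  using finF
proof (induction F rule: finite_induct)
  case empty
  have finV: "finite V" using sg unfolding simple_graph_def by blast
  have "card (cls V {}) \<le> card V" unfolding cls_def using card_image_le[OF finV] .
  then show ?case by simp
next
  case (insert a F)
  have sub: "insert a F \<subseteq> E" using insert.prems .
  then have "F \<subseteq> E" by simp
  then have IH: "card F + card (cls V F) \<le> card V + card (cycles V F)" by (rule insert.IH)
  have "simple_graph V (insert a F)" using sg_subset[OF sg sub] .
  then show ?case using cyc_count_step[OF _ \<open>a \<notin> F\<close> IH] by simp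
qed

lemma cyc_count:
  assumes sg: "simple_graph V E"
  shows "card E + card (cls V E) \<le> card V + card (cycles V E)"
  using cyc_count_gen[OF sg sg_finite_E[OF sg]] by simp

lemma cls_connected:
  assumes "connected_graph V E" shows "card (cls V E) = 1"
proof -
  have "\<forall>x\<in>V. cls_of V E x = V" using assms unfolding connected_graph_def cls_of_def by auto
  then have "cls V E = {V}" using assms unfolding cls_def connected_graph_def by auto
  then show ?thesis by simp
qed

lemma edge_ineq:
  fixes p q :: real assumes p: "p \<ge> 2" and q: "q \<ge> 2"
  shows "(sqrt (2 / p) + sqrt (2 / q) - 1) / 2 \<le> 1 / sqrt (p * q)"
proof -
  define X where "X = sqrt (2 / p)"
  define Y where "Y = sqrt (2 / q)"
  have X1: "X \<le> 1" unfolding X_def using p by simp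
  have Y1: "Y \<le> 1" unfolding Y_def using q by simp
  have "X * Y = sqrt (4 / (p * q))" unfolding X_def Y_def
    by (simp add: real_sqrt_mult[symmetric])
  also have "\<dots> = 2 / sqrt (p * q)" using p q
    by (simp add: real_sqrt_divide)
  finally have XY: "X * Y = 2 / sqrt (p * q)" .
  have "0 \<le> (1 - X) * (1 - Y)" using X1 Y1 by simp
  then have "X + Y - 1 \<le> X * Y" by (simp add: algebra_simps)
  then show ?thesis unfolding XY X_def[symmetric] Y_def[symmetric] by simp
qed

lemma sqrt_pair:
  fixes S a :: real assumes "S \<ge> 0" "a \<ge> 0"
  shows "2 + sqrt (4 + 2 * (S + a)) \<le> sqrt (4 + 2 * S) + sqrt (4 + 2 * a)"
proof -
  have A: "0 \<le> sqrt (4 + 2 * S)" "0 \<le> sqrt (4 + 2 * a)" using assms by auto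
  have s1: "sqrt (4 + 2 * S) ^ 2 = 4 + 2 * S" using assms by simp
  have s2: "sqrt (4 + 2 * a) ^ 2 = 4 + 2 * a" using assms by simp
  have s3: "sqrt (4 + 2 * (S + a)) ^ 2 = 4 + 2 * (S + a)" using assms by simp
  have prod: "sqrt (4 + 2 * S) * sqrt (4 + 2 * a) \<ge> 2 * sqrt (4 + 2 * (S + a))"
  proof -
    have "(2 * sqrt (4 + 2 * (S + a))) ^ 2 \<le> (sqrt (4 + 2 * S) * sqrt (4 + 2 * a)) ^ 2"
      unfolding power_mult_distrib s1 s2 s3 using assms
      by (simp add: algebra_simps mult_nonneg_nonneg)
    then show ?thesis by (rule power2_le_imp_le) (use A in simp)
  qed
  have "(2 + sqrt (4 + 2 * (S + a))) ^ 2 \<le> (sqrt (4 + 2 * S) + sqrt (4 + 2 * a)) ^ 2"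
    using prod s1 s2 s3 by (simp add: power2_sum)
  then show ?thesis by (rule power2_le_imp_le) (use A in simp)
qed

lemma sqrt_sum:
  fixes a :: "'v \<Rightarrow> real"
  assumes "finite A" "\<forall>v\<in>A. a v \<ge> 0"
  shows "2 * (real (card A) - 1) + sqrt (4 + 2 * (\<Sum>v\<in>A. a v)) \<le> (\<Sum>v\<in>A. sqrt (4 + 2 * a v))"
  using assms
proof (induction A rule: finite_induct)
  case empty then show ?case by simp
next
  case (insert w A)
  have S0: "(\<Sum>v\<in>A. a v) \<ge> 0" using insert.prems by (simp add: sum_nonneg)
  have aw: "a w \<ge> 0" using insert.prems by simp
  have IH: "2 * (real (card A) - 1) + sqrt (4 + 2 * (\<Sum>v\<in>A. a v)) \<le> (\<Sum>v\<in>A. sqrt (4 + 2 * a v))"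
    using insert.IH insert.prems by simp
  have "2 + sqrt (4 + 2 * ((\<Sum>v\<in>A. a v) + a w)) \<le> sqrt (4 + 2 * (\<Sum>v\<in>A. a v)) + sqrt (4 + 2 * a w)"
    by (rule sqrt_pair[OF S0 aw])
  then show ?case using IH insert.hyps by (simp add: add.commute)
qed

lemma decr:
  fixes a b :: real assumes "1 \<le> a" "a \<le> b"
  shows "sqrt b - b / 2 \<le> sqrt a - a / 2"
proof -
  define s where "s = sqrt a"
  define t where "t = sqrt b"
  have s1: "1 \<le> s" unfolding s_def using assms by simp
  have st: "s \<le> t" unfolding s_def t_def using assms by simp
  have "a = s^2" "b = t^2" unfolding s_def t_def using assms by simp_all
  moreover have "t - t^2/2 \<le> s - s^2/2"
  proof -
    have "0 \<le> (t - s) * (t + s - 2)" using s1 st by simp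
    then show ?thesis by (simp add: algebra_simps power2_eq_square)
  qed
  ultimately show ?thesis unfolding s_def t_def by simp
qed

lemma d_sqrt: fixes d :: real assumes "d > 0" shows "d * sqrt (2 / d) = sqrt (2 * d)"
proof -
  have "d * sqrt (2 / d) = sqrt (d^2) * sqrt (2 / d)" using assms by simp
  also have "\<dots> = sqrt (d^2 * (2 / d))" by (rule real_sqrt_mult[symmetric])
  also have "d^2 * (2 / d) = 2 * d" using assms by (simp add: power2_eq_square)
  finally show ?thesis .
qed


lemma double_count:
  fixes f :: "'v \<Rightarrow> real"
  assumes "finite V" "finite E" "\<forall>e\<in>E. e \<subseteq> V"
  shows "(\<Sum>e\<in>E. \<Sum>v\<in>e. f v) = (\<Sum>v\<in>V. real (card {e\<in>E. v \<in> e}) * f v)"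
proof -
  have "(\<Sum>e\<in>E. \<Sum>v\<in>e. f v) = (\<Sum>e\<in>E. \<Sum>v\<in>V. if v \<in> e then f v else 0)"
  proof (rule sum.cong[OF refl])
    fix e assume "e \<in> E"
    then have "{v\<in>V. v \<in> e} = e" using assms(3) by blast
    then show "(\<Sum>v\<in>e. f v) = (\<Sum>v\<in>V. if v \<in> e then f v else 0)"
      using sum.inter_filter[OF assms(1), of f "\<lambda>v. v \<in> e"] by simp
  qed
  also have "\<dots> = (\<Sum>v\<in>V. \<Sum>e\<in>E. if v \<in> e then f v else 0)" by (rule sum.swap)
  also have "\<dots> = (\<Sum>v\<in>V. real (card {e\<in>E. v \<in> e}) * f v)"
  proof (rule sum.cong[OF refl])
    fix v assume "v \<in> V"
    have "(\<Sum>e\<in>E. if v \<in> e then f v else 0) = (\<Sum>e\<in>{e\<in>E. v \<in> e}. f v)"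
      using sum.inter_filter[OF assms(2), of "\<lambda>_. f v" "\<lambda>e. v \<in> e"] by simp
    then show "(\<Sum>e\<in>E. if v \<in> e then f v else 0) = real (card {e\<in>E. v \<in> e}) * f v"
      by simp
  qed
  finally show ?thesis .
qed

lemma sg_edge_sub: "simple_graph V E \<Longrightarrow> \<forall>e\<in>E. e \<subseteq> V"
proof
  fix e assume "simple_graph V E" "e \<in> E"
  then obtain u v where "e = {u, v}" "u \<in> V" "v \<in> V" using sg_edge by blast
  then show "e \<subseteq> V" by simp
qed

lemma sg_edge_card: "simple_graph V E \<Longrightarrow> e \<in> E \<Longrightarrow> card e = 2"
proof -
  assume "simple_graph V E" "e \<in> E"
  then obtain u v where "e = {u, v}" "u \<noteq> v" using sg_edge by blast
  then show ?thesis by simp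
qed

lemma handshake:
  assumes sg: "simple_graph V E"
  shows "(\<Sum>v\<in>V. real (degree E v)) = 2 * real (card E)"
proof -
  have finV: "finite V" using sg unfolding simple_graph_def by blast
  have "(\<Sum>e\<in>E. \<Sum>v\<in>e. (1::real)) = (\<Sum>v\<in>V. real (card {e\<in>E. v \<in> e}) * 1)"
    by (rule double_count[OF finV sg_finite_E[OF sg] sg_edge_sub[OF sg]])
  moreover have "(\<Sum>e\<in>E. \<Sum>v\<in>e. (1::real)) = (\<Sum>e\<in>E. 2)"
    by (rule sum.cong[OF refl]) (simp add: sg_edge_card[OF sg])
  ultimately show ?thesis unfolding degree_def by simp
qed

lemma deg_ge2:
  assumes nc: "nontrivial_cactus V E" and vV: "v \<in> V" and ne: "E \<noteq> {}"
  shows "degree E v \<ge> 2"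
proof -
  have cac: "cactus V E" using nc unfolding nontrivial_cactus_def by blast
  have sg: "simple_graph V E" using cac unfolding cactus_def by blast
  have conn: "connected_graph V E" using cac unfolding cactus_def by blast
  have nb: "\<forall>e\<in>E. \<not> is_bridge V E e" using nc unfolding nontrivial_cactus_def by blast
  obtain e0 where "e0 \<in> E" using ne by blast
  then obtain a b where ab: "e0 = {a, b}" "a \<noteq> b" "a \<in> V" "b \<in> V" using sg_edge[OF sg] by blast
  obtain w where w: "w \<in> V" "w \<noteq> v" using ab by (cases "a = v") auto
  have "(adj E)\<^sup>*\<^sup>* v w" using conn vV w unfolding connected_graph_def by blast
  then obtain y where "adj E v y"
    using w(2) by (cases rule: converse_rtranclpE) auto
  then have e1: "{v, y} \<in> E" unfolding adj_def .
  have vy: "v \<noteq> y"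
  proof
    assume "v = y"
    then obtain p q where "{v} = {p, q}" "p \<noteq> q" using sg_edge[OF sg e1] by auto
    then have "p \<in> {v}" "q \<in> {v}" by auto
    then show False using \<open>p \<noteq> q\<close> by simp
  qed
  have yV: "y \<in> V" using sg_edge_sub[OF sg] e1 by blast
  have "connected_graph V (E - {{v, y}})" using nb e1 unfolding is_bridge_def by blast
  then have "(adj (E - {{v, y}}))\<^sup>*\<^sup>* v y" using vV yV unfolding connected_graph_def by blast
  then obtain z where "adj (E - {{v, y}}) v z"
    using vy by (cases rule: converse_rtranclpE) auto
  then have e2: "{v, z} \<in> E" "{v, z} \<noteq> {v, y}" unfolding adj_def by auto
  have "{{v, y}, {v, z}} \<subseteq> {e\<in>E. v \<in> e}" using e1 e2 by auto
  moreover have "finite {e\<in>E. v \<in> e}" using sg_finite_E[OF sg] by simp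
  ultimately have "card {{v, y}, {v, z}} \<le> card {e\<in>E. v \<in> e}" by (rule card_mono[rotated])
  moreover have "card {{v, y}, {v, z}} = 2" using e2(2) by simp
  ultimately show ?thesis unfolding degree_def by simp
qed


lemma lower_bound:
  assumes nc: "nontrivial_cactus V E" and ne: "E \<noteq> {}"
  shows "(real (card V) - real (num_cycles V E) - 1) / 2 + sqrt (real (num_cycles V E)) \<le> randic E"
proof -
  have cac: "cactus V E" using nc unfolding nontrivial_cactus_def by blast
  have sg: "simple_graph V E" using cac unfolding cactus_def by blast
  have conn: "connected_graph V E" using cac unfolding cactus_def by blast
  have finV: "finite V" using sg unfolding simple_graph_def by blast
  have finE: "finite E" using sg_finite_E[OF sg] .
  define d where "d v = real (degree E v)" for v
  define x where "x v = sqrt (2 / d v)" for v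
  define n where "n = real (card V)"
  define m where "m = real (card E)"
  define k where "k = real (num_cycles V E)"
  have d2: "d v \<ge> 2" if "v \<in> V" for v using deg_ge2[OF nc that ne] unfolding d_def by simp
  have edge: "(\<Sum>v\<in>e. x v) / 2 - 1 / 2 \<le> 1 / sqrt (\<Prod>v\<in>e. d v)" if eE: "e \<in> E" for e
  proof -
    obtain a b where ab: "e = {a, b}" "a \<noteq> b" "a \<in> V" "b \<in> V" using sg_edge[OF sg eE] by blast
    have "(sqrt (2 / d a) + sqrt (2 / d b) - 1) / 2 \<le> 1 / sqrt (d a * d b)"
      by (rule edge_ineq[OF d2[OF ab(3)] d2[OF ab(4)]])
    then show ?thesis using ab unfolding x_def by (simp add: diff_divide_distrib)
  qed
  have "randic E = (\<Sum>e\<in>E. 1 / sqrt (\<Prod>v\<in>e. d v))" unfolding randic_def d_def by simp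
  also have "\<dots> \<ge> (\<Sum>e\<in>E. (\<Sum>v\<in>e. x v) / 2 - 1 / 2)" by (rule sum_mono) (rule edge)
  finally have R1: "(\<Sum>e\<in>E. (\<Sum>v\<in>e. x v) / 2 - 1 / 2) \<le> randic E" .
  have "(\<Sum>e\<in>E. (\<Sum>v\<in>e. x v) / 2 - 1 / 2) = (\<Sum>e\<in>E. \<Sum>v\<in>e. x v) / 2 - m / 2"
    unfolding m_def by (simp add: sum_subtractf sum_divide_distrib)
  also have "(\<Sum>e\<in>E. \<Sum>v\<in>e. x v) = (\<Sum>v\<in>V. d v * x v)"
    unfolding d_def degree_def by (rule double_count[OF finV finE sg_edge_sub[OF sg]])
  also have "(\<Sum>v\<in>V. d v * x v) = (\<Sum>v\<in>V. sqrt (4 + 2 * (d v - 2)))"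
  proof (rule sum.cong[OF refl])
    fix v assume "v \<in> V"
    then have "d v > 0" using d2 by fastforce
    then show "d v * x v = sqrt (4 + 2 * (d v - 2))" unfolding x_def using d_sqrt by simp
  qed
  finally have R2: "(\<Sum>v\<in>V. sqrt (4 + 2 * (d v - 2))) / 2 - m / 2 \<le> randic E" using R1 by simp
  have "2 * (n - 1) + sqrt (4 + 2 * (\<Sum>v\<in>V. d v - 2)) \<le> (\<Sum>v\<in>V. sqrt (4 + 2 * (d v - 2)))"
    unfolding n_def by (rule sqrt_sum[OF finV]) (simp add: d2)
  moreover have hs: "(\<Sum>v\<in>V. d v - 2) = 2 * m - 2 * n"
    using handshake[OF sg] unfolding d_def m_def n_def by (simp add: sum_subtractf)
  ultimately have R3: "(n - 1) + sqrt (4 + 2 * (2 * m - 2 * n)) / 2 - m / 2 \<le> randic E"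
    using R2 by simp
  define c where "c = m - n + 1"
  have "sqrt (4 + 2 * (2 * m - 2 * n)) = sqrt (4 * c)" unfolding c_def by (simp add: algebra_simps)
  also have "\<dots> = 2 * sqrt c" by (simp add: real_sqrt_mult)
  finally have R4: "(n - 1) + sqrt c - m / 2 \<le> randic E" using R3 by simp
  have "(\<Sum>v\<in>V. d v - 2) \<ge> 0" by (rule sum_nonneg) (simp add: d2)
  then have c1: "c \<ge> 1" unfolding c_def using hs by simp
  have "card E + card (cls V E) \<le> card V + card (cycles V E)" by (rule cyc_count[OF sg])
  then have "card E + 1 \<le> card V + num_cycles V E"
    using cls_connected[OF conn] unfolding num_cycles_def by simp
  then have ck: "c \<le> k" unfolding c_def m_def n_def k_def by linarith
  have D: "sqrt k - k / 2 \<le> sqrt c - c / 2" by (rule decr[OF c1 ck])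
  have "m = c + n - 1" unfolding c_def by simp
  then have e1: "n - 1 + sqrt c - m / 2 = (n - 1) / 2 + (sqrt c - c / 2)" by (simp add: field_simps)
  have e2: "(n - k - 1) / 2 + sqrt k = (n - 1) / 2 + (sqrt k - k / 2)" by (simp add: field_simps)
  have "(n - k - 1) / 2 + sqrt k \<le> randic E"
    unfolding e2 using D R4 unfolding e1 by (rule order_trans[OF add_left_mono])
  then show ?thesis unfolding n_def k_def .
qed


lemma cycle_vert:
  assumes "cycle_list V E xs" shows "\<Union>(cycle_edges xs) = set xs"
proof
  have L: "length xs \<ge> 3" using assms unfolding cycle_list_def by blast
  show "\<Union>(cycle_edges xs) \<subseteq> set xs"
  proof
    fix w assume "w \<in> \<Union>(cycle_edges xs)"
    then obtain i where i: "i < length xs" "w \<in> {xs ! i, xs ! ((i + 1) mod length xs)}"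
      unfolding cycle_edges_def by blast
    have "0 < length xs" using L by linarith
    then have "(i + 1) mod length xs < length xs" by (rule mod_less_divisor)
    then show "w \<in> set xs" using i by auto
  qed
  show "set xs \<subseteq> \<Union>(cycle_edges xs)"
  proof
    fix w assume "w \<in> set xs"
    then obtain j where j: "j < length xs" "xs ! j = w" by (meson in_set_conv_nth)
    have "{xs ! j, xs ! ((j + 1) mod length xs)} \<in> cycle_edges xs"
      unfolding cycle_edges_def using j(1) by blast
    then show "w \<in> \<Union>(cycle_edges xs)" using j(2) by blast
  qed
qed

lemma cycle_deg:
  assumes cl: "cycle_list V E xs" and w: "w \<in> set xs"
  shows "card {e \<in> cycle_edges xs. w \<in> e} = 2"
proof -
  define L where "L = length xs"
  have L3: "L \<ge> 3" using cl unfolding cycle_list_def L_def by blast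
  have dist: "distinct xs" using cl unfolding cycle_list_def by blast
  define nx where "nx i = (if i = L - 1 then 0 else i + 1)" for i
  have nxm: "(i + 1) mod L = nx i" if "i < L" for i
  proof (cases "i = L - 1")
    case True then show ?thesis unfolding nx_def using L3 by simp
  next
    case False then show ?thesis unfolding nx_def using that by simp
  qed
  define ed where "ed i = {xs ! i, xs ! nx i}" for i
  have ce: "cycle_edges xs = ed ` {..<L}"
  proof (intro set_eqI iffI)
    fix e assume "e \<in> cycle_edges xs"
    then obtain i where i: "i < L" "e = {xs ! i, xs ! ((i + 1) mod L)}"
      unfolding cycle_edges_def L_def by blast
    then have "e = ed i" unfolding ed_def using nxm[OF i(1)] by simp
    then show "e \<in> ed ` {..<L}" using i(1) by blast
  next
    fix e assume "e \<in> ed ` {..<L}"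
    then obtain i where i: "i < L" "e = ed i" by blast
    then have "e = {xs ! i, xs ! ((i + 1) mod length xs)}" unfolding ed_def L_def using nxm[OF i(1)] L_def by simp
    then show "e \<in> cycle_edges xs" unfolding cycle_edges_def using i(1) L_def by blast
  qed
  obtain j where j: "j < L" "xs ! j = w" using w unfolding L_def by (meson in_set_conv_nth)
  define p where "p = (if j = 0 then L - 1 else j - 1)"
  have pL: "p < L" unfolding p_def using j L3 by auto
  have nxp: "nx p = j" unfolding p_def nx_def using j L3 by auto
  have nxL: "nx i < L" if "i < L" for i unfolding nx_def using that L3 by auto
  have inj: "xs ! a = xs ! b \<Longrightarrow> a < L \<Longrightarrow> b < L \<Longrightarrow> a = b" for a b
    using dist unfolding L_def by (simp add: nth_eq_iff_index_eq)
  have nxinv: "i = p" if "i < L" "nx i = j" for i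
  proof (cases "i = L - 1")
    case True
    then have "j = 0" using that unfolding nx_def by simp
    then show ?thesis unfolding p_def using True by simp
  next
    case False
    then have "j = i + 1" using that unfolding nx_def by simp
    then show ?thesis unfolding p_def by simp
  qed
  have edj: "ed j \<in> cycle_edges xs" unfolding ce using j(1) by simp
  have edp: "ed p \<in> cycle_edges xs" unfolding ce using pL by simp
  have wj: "w \<in> ed j" unfolding ed_def using j(2) by simp
  have wp: "w \<in> ed p" unfolding ed_def nxp using j(2) by simp
  have eq: "{e \<in> cycle_edges xs. w \<in> e} = {ed j, ed p}"
  proof (intro set_eqI iffI)
    fix e assume "e \<in> {e \<in> cycle_edges xs. w \<in> e}"
    then have "e \<in> ed ` {..<L}" "w \<in> e" unfolding ce by simp_all
    then obtain i where i: "i < L" "e = ed i" "w \<in> ed i" by auto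
    then have "w = xs ! i \<or> w = xs ! nx i" unfolding ed_def by simp
    then show "e \<in> {ed j, ed p}"
    proof
      assume "w = xs ! i"
      then have "xs ! i = xs ! j" using j(2) by simp
      then have "i = j" by (rule inj[OF _ i(1) j(1)])
      then show ?thesis using i by simp
    next
      assume "w = xs ! nx i"
      then have "xs ! nx i = xs ! j" using j(2) by simp
      then have "nx i = j" by (rule inj[OF _ nxL[OF i(1)] j(1)])
      then have "i = p" by (rule nxinv[OF i(1)])
      then show ?thesis using i by simp
    qed
  next
    fix e assume "e \<in> {ed j, ed p}"
    then show "e \<in> {e \<in> cycle_edges xs. w \<in> e}" using edj edp wj wp by auto
  qed
  have "ed j \<noteq> ed p"
  proof
    assume "ed j = ed p"
    moreover have "xs ! nx j \<in> ed j" unfolding ed_def by simp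
    moreover have "ed p = {xs ! p, xs ! j}" unfolding ed_def nxp ..
    ultimately have m: "xs ! nx j \<in> {xs ! p, xs ! j}" by simp
    have "nx j \<noteq> j" unfolding nx_def using L3 by auto
    then have "xs ! nx j \<noteq> xs ! j" using inj[of "nx j" j] nxL[OF j(1)] j(1) by blast
    with m have "xs ! nx j = xs ! p" by simp
    then have "nx j = p" by (rule inj[OF _ nxL[OF j(1)] pL])
    then show False unfolding nx_def p_def using L3 j(1) by (auto split: if_splits)
  qed
  then show ?thesis unfolding eq by simp
qed


lemma bouquet_eq:
  assumes nc: "nontrivial_cactus V E" and ne: "E \<noteq> {}" and bq: "bouquet V E"
  shows "randic E = (real (card V) - real (num_cycles V E) - 1) / 2 + sqrt (real (num_cycles V E))"
proof -
  define K where "K = cycles V E"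
  have cac: "cactus V E" using nc unfolding nontrivial_cactus_def by blast
  have sg: "simple_graph V E" using cac unfolding cactus_def by blast
  have finV: "finite V" using sg unfolding simple_graph_def by blast
  have finE: "finite E" using sg_finite_E[OF sg] .
  have finK: "finite K" unfolding K_def using finite_cycles[OF sg] .
  have cact: "\<And>C1 C2. C1 \<in> K \<Longrightarrow> C2 \<in> K \<Longrightarrow> C1 \<noteq> C2 \<Longrightarrow> card (\<Union>C1 \<inter> \<Union>C2) \<le> 1"
    using cac unfolding cactus_def K_def by blast
  obtain c where cV: "c \<in> V" and cc: "\<And>C. C \<in> K \<Longrightarrow> c \<in> \<Union>C" and EK: "E = \<Union>K"
    using bq unfolding bouquet_def K_def by blast
  have CE: "C \<subseteq> E" if "C \<in> K" for C using cycles_subset that unfolding K_def by blast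
  have finC: "finite C" if "C \<in> K" for C using finite_subset[OF CE[OF that] finE] .
  have UCV: "\<Union>C \<subseteq> V" if "C \<in> K" for C using CE[OF that] sg_edge_sub[OF sg] by blast
  have two: "C1 = C2" if C: "C1 \<in> K" "C2 \<in> K" "a \<in> \<Union>C1" "a \<in> \<Union>C2" "b \<in> \<Union>C1" "b \<in> \<Union>C2"
    "a \<noteq> b" for C1 C2 a b
  proof (rule ccontr)
    assume "C1 \<noteq> C2"
    then have le: "card (\<Union>C1 \<inter> \<Union>C2) \<le> 1" using cact C by blast
    have "finite (\<Union>C1 \<inter> \<Union>C2)" using UCV[OF C(1)] finV finite_subset by blast
    moreover have "{a, b} \<subseteq> \<Union>C1 \<inter> \<Union>C2" using C by blast
    ultimately have "card {a, b} \<le> card (\<Union>C1 \<inter> \<Union>C2)" by (rule card_mono)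
    then show False using le C(7) by simp
  qed
  have degC: "card {e \<in> C. w \<in> e} = 2" if CK: "C \<in> K" "w \<in> \<Union>C" for C w
  proof -
    obtain xs where xs: "C = cycle_edges xs" "cycle_list V E xs" using CK(1) unfolding K_def cycles_def by blast
    have "w \<in> set xs" using CK(2) cycle_vert[OF xs(2)] xs(1) by simp
    then show ?thesis using cycle_deg[OF xs(2)] xs(1) by simp
  qed
  have split: "{e \<in> E. w \<in> e} = (\<Union>C\<in>K. {e \<in> C. w \<in> e})" for w
    unfolding EK by blast
  have disj: "C1 \<inter> C2 = {}" if CC: "C1 \<in> K" "C2 \<in> K" "C1 \<noteq> C2" for C1 C2
  proof (rule ccontr)
    assume "C1 \<inter> C2 \<noteq> {}"
    then obtain e where e: "e \<in> C1" "e \<in> C2" by blast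
    then have "e \<in> E" using CE[OF CC(1)] by blast
    then obtain a b where ab: "e = {a, b}" "a \<noteq> b" using sg_edge[OF sg] by blast
    have "C1 = C2" by (rule two[of C1 C2 a b]) (use CC e ab in blast)+
    then show False using CC(3) by simp
  qed
  have degc: "degree E c = 2 * card K"
  proof -
    have "degree E c = card (\<Union>C\<in>K. {e \<in> C. c \<in> e})" unfolding degree_def split ..
    also have "\<dots> = (\<Sum>C\<in>K. card {e \<in> C. c \<in> e})"
    proof (rule card_UN_disjoint[OF finK])
      show "\<forall>C\<in>K. finite {e \<in> C. c \<in> e}" using finC by simp
      show "\<forall>i\<in>K. \<forall>j\<in>K. i \<noteq> j \<longrightarrow> {e \<in> i. c \<in> e} \<inter> {e \<in> j. c \<in> e} = {}"
        using disj by blast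
    qed
    also have "\<dots> = (\<Sum>C\<in>K. 2)" using degC cc by simp
    finally show ?thesis by simp
  qed
  have degw: "degree E w = 2" if wV: "w \<in> V" and wc: "w \<noteq> c" for w
  proof -
    have "degree E w \<le> 2"
    proof (cases "\<exists>C1\<in>K. w \<in> \<Union>C1")
      case True
      then obtain C1 where C1: "C1 \<in> K" "w \<in> \<Union>C1" by blast
      have "{e \<in> E. w \<in> e} \<subseteq> {e \<in> C1. w \<in> e}"
      proof
        fix e assume "e \<in> {e \<in> E. w \<in> e}"
        then obtain C where C: "C \<in> K" "e \<in> C" "w \<in> e" unfolding EK by blast
        have "C = C1" by (rule two[of C C1 w c]) (use C C1 cc wc in blast)+
        then show "e \<in> {e \<in> C1. w \<in> e}" using C by simp
      qed
      then have "card {e \<in> E. w \<in> e} \<le> card {e \<in> C1. w \<in> e}"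
        by (rule card_mono[rotated]) (use finC[OF C1(1)] in simp)
      then show ?thesis unfolding degree_def using degC[OF C1] by simp
    next
      case False
      have emp: "{e \<in> E. w \<in> e} = {}" unfolding EK using False by blast
      show ?thesis unfolding degree_def emp by simp
    qed
    then show ?thesis using deg_ge2[OF nc wV ne] by simp
  qed
  define k where "k = real (card K)"
  define n where "n = real (card V)"
  define m where "m = real (card E)"
  define D where "D v = real (degree E v)" for v
  have Dc: "D c = 2 * k" unfolding D_def k_def degc by simp
  have Dw: "D w = 2" if "w \<in> V" "w \<noteq> c" for w unfolding D_def using degw[OF that] by simp
  have k1: "k \<ge> 1" using deg_ge2[OF nc cV ne] degc unfolding k_def by simp
  have "(\<Sum>v\<in>V. D v) = 2 * m" unfolding D_def m_def using handshake[OF sg] .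
  moreover have "(\<Sum>v\<in>V. D v) = D c + (\<Sum>v\<in>V - {c}. D v)" using sum.remove[OF finV cV] .
  moreover have "(\<Sum>v\<in>V - {c}. D v) = (\<Sum>v\<in>V - {c}. 2)" by (rule sum.cong[OF refl]) (simp add: Dw)
  moreover have "card (V - {c}) = card V - 1" using cV finV by simp
  moreover have "card V \<ge> 1" using cV finV card_0_eq[OF finV] by fastforce
  ultimately have mk: "m = k + n - 1" using Dc unfolding n_def by (simp add: of_nat_diff)
  define Ec where "Ec = {e \<in> E. c \<in> e}"
  have EcE: "Ec \<subseteq> E" unfolding Ec_def by blast
  have cardEc: "real (card Ec) = 2 * k" unfolding Ec_def using degc unfolding degree_def k_def by simp
  have f1: "1 / sqrt (\<Prod>v\<in>e. D v) = 1 / sqrt (4 * k)" if eEc: "e \<in> Ec" for e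
  proof -
    have eE: "e \<in> E" "c \<in> e" using eEc unfolding Ec_def by simp_all
    obtain a b where ab: "e = {a, b}" "a \<noteq> b" "a \<in> V" "b \<in> V" using sg_edge[OF sg eE(1)] by blast
    have pr: "(\<Prod>v\<in>e. D v) = D a * D b" using ab by simp
    have "D a * D b = 4 * k"
    proof (cases "a = c")
      case True then show ?thesis using Dc Dw[OF ab(4)] ab(2) by simp
    next
      case False
      then have "b = c" using eE(2) ab(1) by simp
      then show ?thesis using Dc Dw[OF ab(3) False] by simp
    qed
    then show ?thesis using pr by simp
  qed
  have f2: "1 / sqrt (\<Prod>v\<in>e. D v) = 1 / 2" if eEc: "e \<in> E - Ec" for e
  proof -
    have eE: "e \<in> E" "c \<notin> e" using eEc unfolding Ec_def by simp_all
    obtain a b where ab: "e = {a, b}" "a \<noteq> b" "a \<in> V" "b \<in> V" using sg_edge[OF sg eE(1)] by blast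
    have "a \<noteq> c" "b \<noteq> c" using eE(2) ab(1) by auto
    then have "(\<Prod>v\<in>e. D v) = 4" using ab Dw by simp
    then show ?thesis by simp
  qed
  have "randic E = (\<Sum>e\<in>E. 1 / sqrt (\<Prod>v\<in>e. D v))" unfolding randic_def D_def ..
  also have "\<dots> = (\<Sum>e\<in>E - Ec. 1 / sqrt (\<Prod>v\<in>e. D v)) + (\<Sum>e\<in>Ec. 1 / sqrt (\<Prod>v\<in>e. D v))"
    by (rule sum.subset_diff[OF EcE finE])
  also have "\<dots> = (\<Sum>e\<in>E - Ec. 1 / 2) + (\<Sum>e\<in>Ec. 1 / sqrt (4 * k))"
    using f1 f2 by simp
  also have "\<dots> = real (card (E - Ec)) / 2 + real (card Ec) / sqrt (4 * k)" by simp
  also have "real (card (E - Ec)) = m - 2 * k"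
    using card_Diff_subset[OF finite_subset[OF EcE finE] EcE] card_mono[OF finE EcE] cardEc
    unfolding m_def by (simp add: of_nat_diff)
  also have "sqrt (4 * k) = 2 * sqrt k" by (simp add: real_sqrt_mult)
  also have "real (card Ec) / (2 * sqrt k) = sqrt k"
  proof -
    have "sqrt k > 0" using k1 by simp
    moreover have "sqrt k * sqrt k = k" using k1 by simp
    ultimately show ?thesis unfolding cardEc by (simp add: field_simps)
  qed
  finally have "randic E = (m - 2 * k) / 2 + sqrt k" .
  then show ?thesis unfolding mk n_def[symmetric] num_cycles_def K_def[symmetric] k_def[symmetric]
    by (simp add: field_simps)
qed


lemma empty_case:
  assumes nc: "nontrivial_cactus V E" and ne: "E = {}"
  shows "randic E = (real (card V) - real (num_cycles V E) - 1) / 2 + sqrt (real (num_cycles V E))"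
proof -
  have cac: "cactus V E" using nc unfolding nontrivial_cactus_def by blast
  have sg: "simple_graph V E" using cac unfolding cactus_def by blast
  have conn: "connected_graph V E" using cac unfolding cactus_def by blast
  have finV: "finite V" using sg unfolding simple_graph_def by blast
  have R0: "randic E = 0" unfolding ne randic_def by simp
  have noc: "cycles V E = {}"
  proof -
    have "\<not> cycle_list V E xs" for xs
    proof
      assume "cycle_list V E xs"
      then have "0 < length xs" "\<forall>i<length xs. {xs ! i, xs ! ((i + 1) mod length xs)} \<in> E"
        unfolding cycle_list_def by auto
      then have "{xs ! 0, xs ! ((0 + 1) mod length xs)} \<in> E" by blast
      then show False using ne by simp
    qed
    then show ?thesis unfolding cycles_def by blast
  qed
  have eqv: "u = v" if "(adj E)\<^sup>*\<^sup>* u v" for u v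
    using that by (cases rule: converse_rtranclpE) (auto simp: adj_def ne)
  obtain x where x: "x \<in> V" using conn unfolding connected_graph_def by blast
  have "V = {x}"
  proof
    show "V \<subseteq> {x}"
    proof
      fix y assume "y \<in> V"
      then have "(adj E)\<^sup>*\<^sup>* x y" using conn x unfolding connected_graph_def by blast
      then have "x = y" by (rule eqv)
      then show "y \<in> {x}" by simp
    qed
    show "{x} \<subseteq> V" using x by simp
  qed
  then show ?thesis using R0 noc unfolding num_cycles_def by simp
qed

theorem corollary4p4:
  fixes V :: "'a set" and E :: "'a set set"
  assumes "nontrivial_cactus V E"
  shows "randic E \<ge> (real (card V) - real (num_cycles V E) - 1) / 2 + sqrt (real (num_cycles V E)) \<and>
         (bouquet V E \<longrightarrow>
          randic E = (real (card V) - real (num_cycles V E) - 1) / 2 + sqrt (real (num_cycles V E)))"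
proof (cases "E = {}")
  case True
  then show ?thesis using empty_case[OF assms True] by simp
next
  case False
  show ?thesis using lower_bound[OF assms False] bouquet_eq[OF assms False] by simp
qed

end
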